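(* Let $Y=\left(\sum_{n=1}^\infty\ell_\infty^n\right)_{\ell_2}$. Then every finite subset $F$ of $T^\omega_\omega$ satisfies $c_Y(F)=1$ (in particular $T^\omega_\omega$ is crudely finitely representable in $Y$), but $T^\omega_\omega$ admits no bi-Lipschitz embedding into $Y$.
   Context: $\left(\sum_{n=1}^\infty\ell_\infty^n\right)_{\ell_2}$ is the Banach space of sequences $(x_n)_{n\ge1}$ with $x_n\in\ell_\infty^n$ (the space $\mathbb R^n$ with the max norm) and $\|(x_n)\|=(\sum_n\|x_n\|_\infty^2)^{1/2}<\infty$. $T^\omega_\omega$ is the rooted tree in which every vertex has countably infinitely many children, with the unweighted shortest-path metric. A metric space $X$ is $\lambda$-finitely representable in $Y$ if $c_Y(F)\le\lambda$ for every finite $F\subset X$, and crudely finitely representable if this holds for some $\lambda\in[1,\infty)$; here $c_Y(M):=\inf\{\mathrm{Lip}(f)\mathrm{Lip}(f^{-1}): f\colon M\to Y\text{ injective}\}$. *)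

theory Defs
  imports "HOL-Analysis.Analysis"
begin

text \<open>An element of Y is represented by x :: nat => nat => real, where x n is the
  n-th block (a vector in R^n, coordinates 0..<n); coordinates outside the block
  (and the whole block 0) are required to vanish.\<close>

definition block_norm :: "(nat \<Rightarrow> nat \<Rightarrow> real) \<Rightarrow> nat \<Rightarrow> real" where
  "block_norm x n = Max (insert 0 ((\<lambda>i. \<bar>x n i\<bar>) ` {..<n}))"

definition Yspace :: "(nat \<Rightarrow> nat \<Rightarrow> real) set" where
  "Yspace = {x. (\<forall>n i. n \<le> i \<longrightarrow> x n i = 0) \<and>
                 summable (\<lambda>n. (block_norm x n)\<^sup>2)}"

definition Ynorm :: "(nat \<Rightarrow> nat \<Rightarrow> real) \<Rightarrow> real" where
  "Ynorm x = sqrt (\<Sum>n. (block_norm x n)\<^sup>2)"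

definition Ydist :: "(nat \<Rightarrow> nat \<Rightarrow> real) \<Rightarrow> (nat \<Rightarrow> nat \<Rightarrow> real) \<Rightarrow> real" where
  "Ydist x y = Ynorm (\<lambda>n i. x n i - y n i)"

text \<open>Vertices are finite sequences of naturals (root = []); the children of xs are
  xs @ [k]. The shortest-path metric is |xs| + |ys| - 2 |common prefix|.\<close>

fun lcp_len :: "nat list \<Rightarrow> nat list \<Rightarrow> nat" where
  "lcp_len (x # xs) (y # ys) = (if x = y then Suc (lcp_len xs ys) else 0)"
| "lcp_len _ _ = 0"

definition tree_dist :: "nat list \<Rightarrow> nat list \<Rightarrow> real" where
  "tree_dist xs ys = real (length xs + length ys - 2 * lcp_len xs ys)"

text \<open>f : M -> Y is an injective map with Lip(f) Lip(f^-1) <= D, expressed by scaling: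
  s d(x,y) <= rho(f x, f y) <= s D d(x,y).\<close>

definition embeds_with_distortion ::
  "('a \<Rightarrow> 'a \<Rightarrow> real) \<Rightarrow> 'a set \<Rightarrow> ('b \<Rightarrow> 'b \<Rightarrow> real) \<Rightarrow> 'b set \<Rightarrow> real \<Rightarrow> bool" where
  "embeds_with_distortion dX M dY Y D \<longleftrightarrow>
     (\<exists>f. inj_on f M \<and> f ` M \<subseteq> Y \<and>
        (\<exists>s>0. \<forall>x\<in>M. \<forall>y\<in>M. s * dX x y \<le> dY (f x) (f y) \<and> dY (f x) (f y) \<le> s * D * dX x y))"

definition distortion ::
  "('a \<Rightarrow> 'a \<Rightarrow> real) \<Rightarrow> 'a set \<Rightarrow> ('b \<Rightarrow> 'b \<Rightarrow> real) \<Rightarrow> 'b set \<Rightarrow> real" where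
  "distortion dX M dY Y = Inf {D. D \<ge> 1 \<and> embeds_with_distortion dX M dY Y D}"

end

theory Submission imports Defs "HOL-Analysis.Analysis" "HOL-Library.FuncSet"
begin


definition dif :: "(nat \<Rightarrow> nat \<Rightarrow> real) \<Rightarrow> (nat \<Rightarrow> nat \<Rightarrow> real) \<Rightarrow> nat \<Rightarrow> nat \<Rightarrow> real" where
  "dif a b = (\<lambda>n i. a n i - b n i)"

definition Hd :: "nat \<Rightarrow> (nat \<Rightarrow> nat \<Rightarrow> real) \<Rightarrow> real" where
  "Hd N z = sqrt (\<Sum>n<N. (block_norm z n)\<^sup>2)"

definition Td :: "nat \<Rightarrow> (nat \<Rightarrow> nat \<Rightarrow> real) \<Rightarrow> real" where
  "Td N z = sqrt (\<Sum>n. (block_norm z (n + N))\<^sup>2)"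

lemma bn_ge: "i < n \<Longrightarrow> \<bar>x n i\<bar> \<le> block_norm x n"
  unfolding block_norm_def by (rule Max_ge) auto

lemma bn_nonneg: "0 \<le> block_norm x n"
  unfolding block_norm_def by (rule Max_ge_iff[THEN iffD2]) auto

lemma bn_le: "0 \<le> c \<Longrightarrow> (\<And>i. i < n \<Longrightarrow> \<bar>x n i\<bar> \<le> c) \<Longrightarrow> block_norm x n \<le> c"
  unfolding block_norm_def by (rule Max.boundedI) auto

lemma bn_tri: "block_norm (dif a c) n \<le> block_norm (dif a b) n + block_norm (dif b c) n"
proof (rule bn_le)
  show "0 \<le> block_norm (dif a b) n + block_norm (dif b c) n" using bn_nonneg by (simp add: add_nonneg_nonneg)
  fix i assume "i < n"
  then have "\<bar>dif a b n i\<bar> \<le> block_norm (dif a b) n" "\<bar>dif b c n i\<bar> \<le> block_norm (dif b c) n"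
    by (auto intro: bn_ge)
  then show "\<bar>dif a c n i\<bar> \<le> block_norm (dif a b) n + block_norm (dif b c) n"
    unfolding dif_def by linarith
qed

lemma bn_sym: "block_norm (dif a b) n = block_norm (dif b a) n"
  unfolding block_norm_def dif_def by (simp add: abs_minus_commute)

lemma bn_zero: "block_norm (dif a a) n = 0"
  by (rule antisym[OF bn_le bn_nonneg]) (auto simp: dif_def)

lemma sq_sum_le: fixes x y :: real shows "(x + y)\<^sup>2 \<le> 2 * x\<^sup>2 + 2 * y\<^sup>2"
proof -
  have "0 \<le> (x - y)\<^sup>2" by simp
  then show ?thesis by (simp add: power2_eq_square algebra_simps)
qed

lemma bn_sq_le: "(block_norm (dif a c) n)\<^sup>2 \<le> 2 * (block_norm (dif a b) n)\<^sup>2 + 2 * (block_norm (dif b c) n)\<^sup>2"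
proof -
  have "(block_norm (dif a c) n)\<^sup>2 \<le> (block_norm (dif a b) n + block_norm (dif b c) n)\<^sup>2"
    using bn_tri[of a c n b] bn_nonneg[of "dif a c" n] by (simp add: power_mono)
  also have "\<dots> \<le> 2 * (block_norm (dif a b) n)\<^sup>2 + 2 * (block_norm (dif b c) n)\<^sup>2"
    by (rule sq_sum_le)
  finally show ?thesis .
qed

lemma Yspace_summable_gen: "summable (\<lambda>n. (block_norm (dif a b) n)\<^sup>2) \<Longrightarrow> summable (\<lambda>n. (block_norm (dif b c) n)\<^sup>2)
   \<Longrightarrow> summable (\<lambda>n. (block_norm (dif a c) n)\<^sup>2)"
  apply (rule summable_comparison_test[where g="\<lambda>n. 2 * (block_norm (dif a b) n)\<^sup>2 + 2 * (block_norm (dif b c) n)\<^sup>2"])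
  using bn_sq_le by (auto intro!: summable_add summable_mult)

lemma dif_zero_fun: "dif a (\<lambda>n i. 0) = a" unfolding dif_def by simp

lemma Yspace_summable: "a \<in> Yspace \<Longrightarrow> b \<in> Yspace \<Longrightarrow> summable (\<lambda>n. (block_norm (dif a b) n)\<^sup>2)"
proof -
  assume a: "a \<in> Yspace" and b: "b \<in> Yspace"
  have sa: "summable (\<lambda>n. (block_norm (dif a (\<lambda>n i. 0)) n)\<^sup>2)" using a by (simp add: Yspace_def dif_zero_fun)
  have sb: "summable (\<lambda>n. (block_norm (dif b (\<lambda>n i. 0)) n)\<^sup>2)" using b by (simp add: Yspace_def dif_zero_fun)
  have sb': "summable (\<lambda>n. (block_norm (dif (\<lambda>n i. 0) b) n)\<^sup>2)" using sb by (simp add: bn_sym)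
  show ?thesis by (rule Yspace_summable_gen[OF sa sb'])
qed

lemma Ydist_dif: "Ydist a b = sqrt (\<Sum>n. (block_norm (dif a b) n)\<^sup>2)"
  unfolding Ydist_def Ynorm_def dif_def by simp

lemma Ydist_sym: "Ydist a b = Ydist b a"
  unfolding Ydist_dif using bn_sym by simp

lemma decomp:
  assumes "summable (\<lambda>n. (block_norm z n)\<^sup>2)"
  shows "sqrt (\<Sum>n. (block_norm z n)\<^sup>2) ^ 2 = (Hd N z)\<^sup>2 + (Td N z)\<^sup>2"
proof -
  have st: "summable (\<lambda>n. (block_norm z (n + N))\<^sup>2)" using assms by (subst summable_iff_shift)
  have t0: "0 \<le> (\<Sum>n. (block_norm z (n + N))\<^sup>2)" by (rule suminf_nonneg[OF st]) simp
  have h0: "0 \<le> (\<Sum>n<N. (block_norm z n)\<^sup>2)" by (rule sum_nonneg) simp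
  have a0: "0 \<le> (\<Sum>n. (block_norm z n)\<^sup>2)" by (rule suminf_nonneg[OF assms]) simp
  show ?thesis unfolding Hd_def Td_def using t0 h0 a0 suminf_split_initial_segment[OF assms, of N] by simp
qed

lemma Hd_le: assumes "summable (\<lambda>n. (block_norm z n)\<^sup>2)" shows "Hd N z \<le> sqrt (\<Sum>n. (block_norm z n)\<^sup>2)"
proof -
  have "(Hd N z)\<^sup>2 \<le> (sqrt (\<Sum>n. (block_norm z n)\<^sup>2))\<^sup>2" using decomp[OF assms, of N] by simp
  then show ?thesis by (rule power2_le_imp_le) (use suminf_nonneg[OF assms] in simp)
qed

lemma Td_le: assumes "summable (\<lambda>n. (block_norm z n)\<^sup>2)" shows "Td N z \<le> sqrt (\<Sum>n. (block_norm z n)\<^sup>2)"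
proof -
  have "(Td N z)\<^sup>2 \<le> (sqrt (\<Sum>n. (block_norm z n)\<^sup>2))\<^sup>2" using decomp[OF assms, of N] by simp
  then show ?thesis by (rule power2_le_imp_le) (use suminf_nonneg[OF assms] in simp)
qed

lemma Hd_tri: "Hd N (dif a c) \<le> Hd N (dif a b) + Hd N (dif b c)"
proof -
  have "Hd N (dif a c) = L2_set (block_norm (dif a c)) {..<N}" by (simp add: Hd_def L2_set_def)
  also have "\<dots> \<le> L2_set (\<lambda>n. block_norm (dif a b) n + block_norm (dif b c) n) {..<N}"
    by (rule L2_set_mono) (auto simp: bn_tri bn_nonneg)
  also have "\<dots> \<le> L2_set (block_norm (dif a b)) {..<N} + L2_set (block_norm (dif b c)) {..<N}"
    by (rule L2_set_triangle_ineq)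
  finally show ?thesis by (simp add: Hd_def L2_set_def)
qed

lemma minkowski_inf:
  fixes p q r :: "nat \<Rightarrow> real"
  assumes "\<And>n. 0 \<le> r n" "\<And>n. 0 \<le> p n" "\<And>n. 0 \<le> q n" "\<And>n. r n \<le> p n + q n"
    and sp: "summable (\<lambda>n. (p n)\<^sup>2)" and sq: "summable (\<lambda>n. (q n)\<^sup>2)"
  shows "sqrt (\<Sum>n. (r n)\<^sup>2) \<le> sqrt (\<Sum>n. (p n)\<^sup>2) + sqrt (\<Sum>n. (q n)\<^sup>2)"
proof -
  have le2: "(r n)\<^sup>2 \<le> 2 * (p n)\<^sup>2 + 2 * (q n)\<^sup>2" for n
  proof -
    have "(r n)\<^sup>2 \<le> (p n + q n)\<^sup>2" using assms by (simp add: power_mono)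
    also have "\<dots> \<le> 2 * (p n)\<^sup>2 + 2 * (q n)\<^sup>2" by (rule sq_sum_le)
    finally show ?thesis .
  qed
  have sr: "summable (\<lambda>n. (r n)\<^sup>2)"
    by (rule summable_comparison_test[where g="\<lambda>n. 2 * (p n)\<^sup>2 + 2 * (q n)\<^sup>2"]) (use le2 sp sq in \<open>auto intro!: summable_add summable_mult\<close>)
  define C where "C = sqrt (\<Sum>n. (p n)\<^sup>2) + sqrt (\<Sum>n. (q n)\<^sup>2)"
  have "0 \<le> (\<Sum>n. (p n)\<^sup>2)" by (rule suminf_nonneg[OF sp]) simp
  moreover have "0 \<le> (\<Sum>n. (q n)\<^sup>2)" by (rule suminf_nonneg[OF sq]) simp
  ultimately have C0: "0 \<le> C" unfolding C_def by simp
  have "(\<Sum>n<M. (r n)\<^sup>2) \<le> C\<^sup>2" for M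
  proof -
    have "L2_set r {..<M} \<le> L2_set (\<lambda>n. p n + q n) {..<M}"
      by (rule L2_set_mono) (use assms in auto)
    also have "\<dots> \<le> L2_set p {..<M} + L2_set q {..<M}" by (rule L2_set_triangle_ineq)
    also have "\<dots> \<le> C" unfolding C_def L2_set_def
      by (intro add_mono real_sqrt_le_mono sum_le_suminf sp sq) auto
    finally have "sqrt (\<Sum>n<M. (r n)\<^sup>2) \<le> C" by (simp add: L2_set_def)
    then show ?thesis using C0 by (simp add: real_sqrt_le_iff sqrt_le_D)
  qed
  then have "(\<Sum>n. (r n)\<^sup>2) \<le> C\<^sup>2" by (rule suminf_le_const[OF sr])
  then have "sqrt (\<Sum>n. (r n)\<^sup>2) \<le> sqrt (C\<^sup>2)" by (rule real_sqrt_le_mono)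
  then show ?thesis using C0 by (simp add: C_def)
qed

lemma Td_tri:
  assumes "summable (\<lambda>n. (block_norm (dif a b) n)\<^sup>2)" "summable (\<lambda>n. (block_norm (dif b c) n)\<^sup>2)"
  shows "Td N (dif a c) \<le> Td N (dif a b) + Td N (dif b c)"
  unfolding Td_def
  apply (rule minkowski_inf)
  using assms summable_iff_shift[of "\<lambda>n. (block_norm (dif a b) n)\<^sup>2" N]
    summable_iff_shift[of "\<lambda>n. (block_norm (dif b c) n)\<^sup>2" N] by (auto simp: bn_nonneg bn_tri)



lemma bn_le_Hd: "n < N \<Longrightarrow> block_norm z n \<le> Hd N z"
proof -
  assume "n < N"
  then have "(block_norm z n)\<^sup>2 \<le> (\<Sum>m<N. (block_norm z m)\<^sup>2)"
    by (intro member_le_sum) auto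
  then show ?thesis unfolding Hd_def by (rule real_le_rsqrt)
qed

lemma floor_close: fixes a b e :: real assumes "e > 0" "\<lfloor>a / e\<rfloor> = \<lfloor>b / e\<rfloor>" shows "\<bar>a - b\<bar> \<le> e"
proof -
  have "a / e - 1 < \<lfloor>a / e\<rfloor>" "\<lfloor>a / e\<rfloor> \<le> a / e" "b / e - 1 < \<lfloor>b / e\<rfloor>" "\<lfloor>b / e\<rfloor> \<le> b / e"
    by linarith+
  then have "\<bar>a / e - b / e\<bar> \<le> 1" using assms(2) by linarith
  then have "\<bar>(a - b) / e\<bar> \<le> 1" by (simp add: diff_divide_distrib)
  then show ?thesis using assms(1) by (simp add: abs_divide divide_le_eq)
qed

lemma close_pair:
  fixes w :: "nat \<Rightarrow> nat \<Rightarrow> nat \<Rightarrow> real"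
  assumes K: "infinite K" and d: "\<delta> > 0" and bnd: "\<forall>k\<in>K. Hd N (dif (w k) v) \<le> A"
  shows "\<exists>k\<in>K. \<exists>j\<in>K. k \<noteq> j \<and> Hd N (dif (w k) (w j)) \<le> \<delta>"
proof -
  define e where "e = \<delta> / (real N + 1)"
  have e0: "e > 0" using d by (simp add: e_def)
  define S where "S = {p :: nat \<times> nat. fst p < N \<and> snd p < fst p}"
  have finS: "finite S" by (rule finite_subset[of _ "{..<N} \<times> {..<N}"]) (auto simp: S_def)
  define cell where "cell k = (\<lambda>p\<in>S. \<lfloor>dif (w k) v (fst p) (snd p) / e\<rfloor>)" for k
  have "cell ` K \<subseteq> (\<Pi>\<^sub>E p\<in>S. {\<lfloor>- A / e\<rfloor>..\<lfloor>A / e\<rfloor>})"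
  proof
    fix c assume "c \<in> cell ` K"
    then obtain k where k: "k \<in> K" "c = cell k" by auto
    have "\<lfloor>dif (w k) v (fst p) (snd p) / e\<rfloor> \<in> {\<lfloor>- A / e\<rfloor>..\<lfloor>A / e\<rfloor>}" if "p \<in> S" for p
    proof -
      have "\<bar>dif (w k) v (fst p) (snd p)\<bar> \<le> block_norm (dif (w k) v) (fst p)"
        using that by (intro bn_ge) (auto simp: S_def)
      also have "\<dots> \<le> Hd N (dif (w k) v)" using that by (intro bn_le_Hd) (auto simp: S_def)
      also have "\<dots> \<le> A" using bnd k by auto
      finally have h: "- A \<le> dif (w k) v (fst p) (snd p)" "dif (w k) v (fst p) (snd p) \<le> A" by auto
      have "- A / e \<le> dif (w k) v (fst p) (snd p) / e" "dif (w k) v (fst p) (snd p) / e \<le> A / e"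
        using divide_right_mono[OF h(1), of e] divide_right_mono[OF h(2), of e] e0 by auto
      then show ?thesis by (auto intro: floor_mono)
    qed
    then show "c \<in> (\<Pi>\<^sub>E p\<in>S. {\<lfloor>- A / e\<rfloor>..\<lfloor>A / e\<rfloor>})" using k by (auto simp: cell_def)
  qed
  then have "finite (cell ` K)" by (rule finite_subset) (intro finite_PiE finS, simp)
  from pigeonhole_infinite[OF K this] obtain k where k: "k \<in> K" and inf: "infinite {a\<in>K. cell a = cell k}" by blast
  have "infinite ({a\<in>K. cell a = cell k} - {k})" using inf by simp
  then have "{a\<in>K. cell a = cell k} - {k} \<noteq> {}" by (rule infinite_imp_nonempty)
  then obtain j where j: "j \<in> K" "cell j = cell k" "j \<noteq> k" by blast
  have bn: "block_norm (dif (w k) (w j)) n \<le> e" if "n < N" for n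
  proof (rule bn_le)
    show "0 \<le> e" using e0 by simp
    fix i assume "i < n"
    then have p: "(n, i) \<in> S" using that by (simp add: S_def)
    have "cell k (n, i) = cell j (n, i)" using j by simp
    then have "\<lfloor>dif (w k) v n i / e\<rfloor> = \<lfloor>dif (w j) v n i / e\<rfloor>" using p by (simp add: cell_def)
    then have "\<bar>dif (w k) v n i - dif (w j) v n i\<bar> \<le> e" by (rule floor_close[OF e0])
    then show "\<bar>dif (w k) (w j) n i\<bar> \<le> e" by (simp add: dif_def)
  qed
  have "(\<Sum>n<N. (block_norm (dif (w k) (w j)) n)\<^sup>2) \<le> (\<Sum>n<N. e\<^sup>2)"
    using bn bn_nonneg by (intro sum_mono power_mono) auto
  also have "\<dots> = real N * e\<^sup>2" by simp
  also have "\<dots> \<le> \<delta>\<^sup>2"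
  proof -
    have "real N * e\<^sup>2 = \<delta>\<^sup>2 * (real N / (real N + 1)) * (1 / (real N + 1))"
      by (simp add: e_def power2_eq_square field_simps)
    also have "\<dots> \<le> \<delta>\<^sup>2 * 1 * 1"
      by (intro mult_mono) (auto simp: field_simps)
    finally show ?thesis by simp
  qed
  finally have "Hd N (dif (w k) (w j)) \<le> sqrt (\<delta>\<^sup>2)" unfolding Hd_def by (rule real_sqrt_le_mono)
  then have "Hd N (dif (w k) (w j)) \<le> \<delta>" using d by simp
  then show ?thesis using k j(1) j(3) by metis
qed

lemma nonlin:
  fixes a h t \<rho> A \<delta> :: real
  assumes "0 \<le> a" "a \<le> A" "0 \<le> h" "0 \<le> t" "t \<le> \<delta>" "0 \<le> \<rho>" "h\<^sup>2 + \<rho>\<^sup>2 \<le> A\<^sup>2" "0 \<le> \<delta>"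
  shows "(a + h)\<^sup>2 + (t + \<rho>)\<^sup>2 \<le> 4 * A\<^sup>2 - \<rho>\<^sup>2 + \<delta>\<^sup>2 + 2 * \<delta> * A"
proof -
  have "\<rho>\<^sup>2 \<le> A\<^sup>2" using assms(7) using zero_le_power2[of h] by linarith
  then have "\<rho> \<le> A" by (rule power2_le_imp_le) (use assms in linarith)
  have "(a + h)\<^sup>2 \<le> (A + h)\<^sup>2" using assms by (intro power_mono) auto
  also have "\<dots> \<le> 2 * A\<^sup>2 + 2 * h\<^sup>2" by (rule sq_sum_le)
  finally have 1: "(a + h)\<^sup>2 \<le> 4 * A\<^sup>2 - 2 * \<rho>\<^sup>2" using assms(7) by linarith
  have "(t + \<rho>)\<^sup>2 = t\<^sup>2 + 2 * t * \<rho> + \<rho>\<^sup>2" by (simp add: power2_eq_square algebra_simps)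
  moreover have "t\<^sup>2 \<le> \<delta>\<^sup>2" using assms by (intro power_mono) auto
  moreover have "t * \<rho> \<le> \<delta> * A" using assms \<open>\<rho> \<le> A\<close> by (intro mult_mono) auto
  ultimately show ?thesis using 1 by simp
qed



lemma Ydist_sq: "a \<in> Yspace \<Longrightarrow> b \<in> Yspace \<Longrightarrow> (Ydist a b)\<^sup>2 = (Hd N (dif a b))\<^sup>2 + (Td N (dif a b))\<^sup>2"
  unfolding Ydist_dif by (rule decomp[OF Yspace_summable])

lemma Ydist_nonneg: "a \<in> Yspace \<Longrightarrow> b \<in> Yspace \<Longrightarrow> 0 \<le> Ydist a b"
  unfolding Ydist_dif by (simp add: suminf_nonneg[OF Yspace_summable])

lemma Hd_nonneg: "0 \<le> Hd N z" unfolding Hd_def by (simp add: sum_nonneg)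
lemma Td_nonneg: "a \<in> Yspace \<Longrightarrow> b \<in> Yspace \<Longrightarrow> 0 \<le> Td N (dif a b)"
  unfolding Td_def using Yspace_summable[of a b] summable_iff_shift[of "\<lambda>n. (block_norm (dif a b) n)\<^sup>2" N]
  by (simp add: suminf_nonneg)

lemma Td_sym: "Td N (dif a b) = Td N (dif b a)" unfolding Td_def using bn_sym by simp
lemma Hd_sym: "Hd N (dif a b) = Hd N (dif b a)" unfolding Hd_def using bn_sym by simp

lemma core:
  fixes w :: "nat \<Rightarrow> nat \<Rightarrow> nat \<Rightarrow> real"
  assumes u: "u \<in> Yspace" and v: "v \<in> Yspace" and w: "\<forall>k\<in>K. w k \<in> Yspace" and K: "infinite K"
    and uv: "Ydist u v \<le> A" and vw: "\<forall>k\<in>K. Ydist v (w k) \<le> A"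
    and ww: "\<forall>k\<in>K. \<forall>j\<in>K. k \<noteq> j \<longrightarrow> B \<le> Ydist (w k) (w j)"
    and d: "\<delta> > 0" and B: "0 \<le> B"
  shows "\<exists>k\<in>K. (Ydist u (w k))\<^sup>2 \<le> 4 * A\<^sup>2 - (B\<^sup>2 - \<delta>\<^sup>2) / 4 + \<delta>\<^sup>2 + 2 * \<delta> * A"
proof -
  have suv: "summable (\<lambda>n. (block_norm (dif u v) n)\<^sup>2)" by (rule Yspace_summable[OF u v])
  obtain N where N: "\<forall>n\<ge>N. norm (\<Sum>i. (block_norm (dif u v) (i + n))\<^sup>2) < \<delta>\<^sup>2"
    using suminf_exist_split[OF _ suv, of "\<delta>\<^sup>2"] d by auto
  have "(\<Sum>i. (block_norm (dif u v) (i + N))\<^sup>2) \<le> \<delta>\<^sup>2" using N by auto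
  then have "Td N (dif u v) \<le> sqrt (\<delta>\<^sup>2)" unfolding Td_def by (rule real_sqrt_le_mono)
  then have TN: "Td N (dif u v) \<le> \<delta>" using d by simp
  have "\<forall>k\<in>K. Hd N (dif (w k) v) \<le> A"
  proof
    fix k assume k: "k \<in> K"
    have "Hd N (dif (w k) v) \<le> Ydist (w k) v" unfolding Ydist_dif
      by (rule Hd_le[OF Yspace_summable]) (use w k v in auto)
    also have "\<dots> \<le> A" using vw k Ydist_sym by metis
    finally show "Hd N (dif (w k) v) \<le> A" .
  qed
  from close_pair[OF K d this] obtain k j where kj: "k \<in> K" "j \<in> K" "k \<noteq> j" "Hd N (dif (w k) (w j)) \<le> \<delta>"
    by blast
  define \<rho> where "\<rho> i = Td N (dif v (w i))" for i
  have wk: "w k \<in> Yspace" and wj: "w j \<in> Yspace" using w kj by auto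
  have "Td N (dif (w k) (w j)) \<le> Td N (dif (w k) v) + Td N (dif v (w j))"
    by (rule Td_tri; rule Yspace_summable) (use wk wj v in auto)
  then have Tle: "Td N (dif (w k) (w j)) \<le> \<rho> k + \<rho> j" by (simp add: \<rho>_def Td_sym)
  have "B \<le> Ydist (w k) (w j)" using ww kj by blast
  then have "B\<^sup>2 \<le> (Ydist (w k) (w j))\<^sup>2" using B by (intro power_mono) auto
  also have "\<dots> = (Hd N (dif (w k) (w j)))\<^sup>2 + (Td N (dif (w k) (w j)))\<^sup>2" by (rule Ydist_sq[OF wk wj])
  also have "(Hd N (dif (w k) (w j)))\<^sup>2 \<le> \<delta>\<^sup>2" using kj Hd_nonneg by (intro power_mono) auto
  also have "(Td N (dif (w k) (w j)))\<^sup>2 \<le> (\<rho> k + \<rho> j)\<^sup>2" using Tle Td_nonneg[OF wk wj] by (intro power_mono) auto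
  finally have sum_ge: "B\<^sup>2 - \<delta>\<^sup>2 \<le> (\<rho> k + \<rho> j)\<^sup>2" by simp
  have rnn: "i \<in> K \<Longrightarrow> 0 \<le> \<rho> i" for i by (simp add: \<rho>_def Td_nonneg v w)
  obtain i where i: "i \<in> K" "(B\<^sup>2 - \<delta>\<^sup>2) / 4 \<le> (\<rho> i)\<^sup>2"
  proof (cases "\<rho> j \<le> \<rho> k")
    case True
    have "(\<rho> k + \<rho> j)\<^sup>2 \<le> (2 * \<rho> k)\<^sup>2" using True rnn kj by (intro power_mono) auto
    then show ?thesis using that[of k] kj sum_ge by (simp add: power_mult_distrib)
  next
    case False
    have "(\<rho> k + \<rho> j)\<^sup>2 \<le> (2 * \<rho> j)\<^sup>2" using False rnn kj by (intro power_mono) auto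
    then show ?thesis using that[of j] kj sum_ge by (simp add: power_mult_distrib)
  qed
  have wi: "w i \<in> Yspace" using w i by auto
  have A0: "0 \<le> A" using uv Ydist_nonneg[OF u v] by linarith
  have H1: "Hd N (dif u (w i)) \<le> Hd N (dif u v) + Hd N (dif v (w i))" by (rule Hd_tri)
  have T1: "Td N (dif u (w i)) \<le> Td N (dif u v) + \<rho> i" unfolding \<rho>_def
    by (rule Td_tri; rule Yspace_summable) (use u wi v in auto)
  have Huv: "Hd N (dif u v) \<le> A" using Hd_le[OF suv, of N] uv by (simp add: Ydist_dif)
  have hv: "(Hd N (dif v (w i)))\<^sup>2 + (\<rho> i)\<^sup>2 \<le> A\<^sup>2"
  proof -
    have "(Hd N (dif v (w i)))\<^sup>2 + (\<rho> i)\<^sup>2 = (Ydist v (w i))\<^sup>2" unfolding \<rho>_def by (rule Ydist_sq[OF v wi, symmetric])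
    also have "\<dots> \<le> A\<^sup>2" using vw i Ydist_nonneg[OF v wi] by (intro power_mono) auto
    finally show ?thesis .
  qed
  have "(Ydist u (w i))\<^sup>2 = (Hd N (dif u (w i)))\<^sup>2 + (Td N (dif u (w i)))\<^sup>2" by (rule Ydist_sq[OF u wi])
  also have "\<dots> \<le> (Hd N (dif u v) + Hd N (dif v (w i)))\<^sup>2 + (Td N (dif u v) + \<rho> i)\<^sup>2"
    using H1 T1 Hd_nonneg Td_nonneg[OF u wi] by (intro add_mono power_mono) auto
  also have "\<dots> \<le> 4 * A\<^sup>2 - (\<rho> i)\<^sup>2 + \<delta>\<^sup>2 + 2 * \<delta> * A"
    by (rule nonlin) (use Hd_nonneg Td_nonneg[OF u v] Huv TN rnn[OF i(1)] hv d in auto)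
  also have "\<dots> \<le> 4 * A\<^sup>2 - (B\<^sup>2 - \<delta>\<^sup>2) / 4 + \<delta>\<^sup>2 + 2 * \<delta> * A" using i by simp
  finally show ?thesis using i by blast
qed



lemma lcp_app: "lcp_len (x @ a) (x @ b) = length x + lcp_len a b"
  by (induction x) auto

lemma lcp_self: "lcp_len x x = length x"
  by (induction x) auto

lemma lcp_le1: "lcp_len a b \<le> length a"
  by (induction a b rule: lcp_len.induct) auto

lemma lcp_le2: "lcp_len a b \<le> length b"
  by (induction a b rule: lcp_len.induct) auto

lemma lcp_sym: "lcp_len a b = lcp_len b a"
  by (induction a b rule: lcp_len.induct) auto

lemma lcp_min: "min (lcp_len x y) (lcp_len y z) \<le> lcp_len x z"
proof (induction x arbitrary: y z)
  case Nil then show ?case by simp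
next
  case (Cons a x)
  show ?case
  proof (cases y)
    case Nil then show ?thesis by simp
  next
    case (Cons b y')
    show ?thesis
    proof (cases z)
      case Nil then show ?thesis by simp
    next
      case (Cons c z')
      show ?thesis using Cons.IH[of y' z'] \<open>y = b # y'\<close> Cons by auto
    qed
  qed
qed

lemma lcp_eq: "lcp_len x y = length x \<Longrightarrow> length x = length y \<Longrightarrow> x = y"
  by (induction x y rule: lcp_len.induct) (auto split: if_splits)

lemma td_real: "tree_dist x y = real (length x) + real (length y) - 2 * real (lcp_len x y)"
proof -
  have "2 * lcp_len x y \<le> length x + length y" using lcp_le1[of x y] lcp_le2[of x y] by linarith
  then show ?thesis unfolding tree_dist_def by (simp add: of_nat_diff)
qed

lemma td_nonneg: "0 \<le> tree_dist x y" unfolding tree_dist_def by simp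

lemma td_sym: "tree_dist x y = tree_dist y x"
  unfolding td_real using lcp_sym[of x y] by simp

lemma td_self: "tree_dist x x = 0"
  unfolding td_real lcp_self by simp

lemma td_tri: "tree_dist x z \<le> tree_dist x y + tree_dist y z"
proof -
  have "lcp_len x y + lcp_len y z \<le> length y + lcp_len x z"
    using lcp_min[of x y z] lcp_le2[of x y] lcp_le1[of y z] by linarith
  then show ?thesis unfolding td_real by linarith
qed

lemma td_zero: "tree_dist x y = 0 \<Longrightarrow> x = y"
proof -
  assume "tree_dist x y = 0"
  then have "length x + length y = 2 * lcp_len x y" unfolding td_real by linarith
  then have "lcp_len x y = length x" "length x = length y" using lcp_le1[of x y] lcp_le2[of x y] by linarith+
  then show ?thesis by (rule lcp_eq)
qed

lemma td_desc: "tree_dist x (x @ zs) = real (length zs)"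
  using lcp_app[of x "[]" zs] unfolding td_real by simp

lemma td_fork: "k \<noteq> k' \<Longrightarrow> tree_dist (x @ k # a) (x @ k' # b) = real (length a + length b + 2)"
  using lcp_app[of x "k # a" "k' # b"] unfolding td_real by simp

lemma td_diff: "\<bar>tree_dist x p - tree_dist y p\<bar> \<le> tree_dist x y"
  using td_tri[of x p y] td_tri[of y p x] td_sym[of x y] td_tri[of x y p] td_tri[of y x p] by linarith



definition Pp :: "(nat list \<Rightarrow> nat \<Rightarrow> nat \<Rightarrow> real) \<Rightarrow> nat \<Rightarrow> real \<Rightarrow> bool" where
  "Pp f T lam \<longleftrightarrow> (\<forall>x. infinite {k. \<exists>ys. length ys + 1 = T \<and> Ydist (f x) (f (x @ k # ys)) \<le> lam * real T})"

lemma arith_step: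
  fixes s lam t \<delta> Y :: real
  assumes s: "s > 0" and sl: "s \<le> lam" and t: "t \<ge> 1" and d: "\<delta> = s\<^sup>2 * t / (8 * lam)"
    and Y: "Y \<le> 4 * (lam * t)\<^sup>2 - ((2 * s * t)\<^sup>2 - \<delta>\<^sup>2) / 4 + \<delta>\<^sup>2 + 2 * \<delta> * (lam * t)"
  shows "Y \<le> (2 * t)\<^sup>2 * (lam\<^sup>2 - s\<^sup>2 / 8)"
proof -
  have l0: "lam > 0" using s sl by linarith
  have d1: "2 * \<delta> * (lam * t) = s\<^sup>2 * t\<^sup>2 / 4" using l0 by (simp add: d power2_eq_square field_simps)
  have d0: "0 \<le> \<delta>" using l0 s t by (simp add: d)
  have "\<delta> = (s * t / 8) * (s / lam)" using l0 by (simp add: d power2_eq_square field_simps)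
  also have "\<dots> \<le> (s * t / 8) * 1" using s t l0 sl by (intro mult_left_mono) auto
  finally have "\<delta> \<le> s * t / 8" by simp
  then have d2: "\<delta>\<^sup>2 \<le> (s * t / 8)\<^sup>2" using d0 by (intro power_mono) auto
  have e1: "(2 * s * t)\<^sup>2 = 4 * (s\<^sup>2 * t\<^sup>2)" "(s * t / 8)\<^sup>2 = s\<^sup>2 * t\<^sup>2 / 64" "(lam * t)\<^sup>2 = lam\<^sup>2 * t\<^sup>2"
    "(2 * t)\<^sup>2 * (lam\<^sup>2 - s\<^sup>2 / 8) = 4 * (lam\<^sup>2 * t\<^sup>2) - s\<^sup>2 * t\<^sup>2 / 2"
    by (simp_all add: power2_eq_square algebra_simps)
  have Y': "Y \<le> 4 * (lam\<^sup>2 * t\<^sup>2) - (4 * (s\<^sup>2 * t\<^sup>2) - \<delta>\<^sup>2) / 4 + \<delta>\<^sup>2 + s\<^sup>2 * t\<^sup>2 / 4"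
    using Y unfolding d1 e1(1) e1(3) .
  have d2': "\<delta>\<^sup>2 \<le> s\<^sup>2 * t\<^sup>2 / 64" using d2 unfolding e1(2) .
  have lin: "Y \<le> 4 * a - b / 2" if "0 \<le> b" "Y \<le> 4 * a - (4 * b - c) / 4 + c + b / 4" "c \<le> b / 64"
    for a b c :: real using that by (simp add: field_simps)
  show ?thesis unfolding e1(4) by (rule lin[OF _ Y' d2']) simp
qed

lemma step:
  fixes f :: "nat list \<Rightarrow> nat \<Rightarrow> nat \<Rightarrow> real"
  assumes fY: "\<And>x. f x \<in> Yspace" and s: "s > 0" and low: "\<And>x y. s * tree_dist x y \<le> Ydist (f x) (f y)"
    and P: "Pp f T lam" and T: "T \<ge> 1"
  shows "s \<le> lam \<and> Pp f (2 * T) (sqrt (lam\<^sup>2 - s\<^sup>2 / 8))"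
proof -
  have slam: "s \<le> lam"
  proof -
    have "infinite {k. \<exists>ys. length ys + 1 = T \<and> Ydist (f []) (f ([] @ k # ys)) \<le> lam * real T}"
      using P[unfolded Pp_def, rule_format, of "[]"] .
    then have "{k. \<exists>ys. length ys + 1 = T \<and> Ydist (f []) (f ([] @ k # ys)) \<le> lam * real T} \<noteq> {}"
      by (rule infinite_imp_nonempty)
    then obtain k ys where kys: "length ys + 1 = T" "Ydist (f []) (f ([] @ k # ys)) \<le> lam * real T" by blast
    have "s * real T = s * tree_dist [] ([] @ k # ys)" using kys(1) td_desc[of "[]" "k # ys"] by simp
    also have "\<dots> \<le> lam * real T" using low[of "[]" "[] @ k # ys"] kys(2) by linarith
    finally show ?thesis using T by simp
  qed
  have l0: "lam > 0" using s slam by linarith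
  define lam' where "lam' = sqrt (lam\<^sup>2 - s\<^sup>2 / 8)"
  have "Pp f (2 * T) lam'" unfolding Pp_def
  proof
    fix x
    define S1 where "S1 = {k. \<exists>ys. length ys + 1 = T \<and> Ydist (f x) (f (x @ k # ys)) \<le> lam * real T}"
    define S2 where "S2 = {k. \<exists>ys. length ys + 1 = 2 * T \<and> Ydist (f x) (f (x @ k # ys)) \<le> lam' * real (2 * T)}"
    have "S1 \<subseteq> S2"
    proof
      fix k assume "k \<in> S1"
      then obtain ys where ys: "length ys + 1 = T" "Ydist (f x) (f (x @ k # ys)) \<le> lam * real T"
        unfolding S1_def by blast
      define m where "m = x @ k # ys"
      define K1 where "K1 = {k'. \<exists>zs. length zs + 1 = T \<and> Ydist (f m) (f (m @ k' # zs)) \<le> lam * real T}"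
      have K1: "infinite K1" using P[unfolded Pp_def, rule_format, of m] unfolding K1_def .
      define zs where "zs k' = (SOME zs. length zs + 1 = T \<and> Ydist (f m) (f (m @ k' # zs)) \<le> lam * real T)" for k'
      have zsP: "length (zs k') + 1 = T \<and> Ydist (f m) (f (m @ k' # zs k')) \<le> lam * real T" if "k' \<in> K1" for k'
        using that unfolding K1_def zs_def by (rule CollectE) (rule someI_ex)
      define w where "w k' = f (m @ k' # zs k')" for k'
      define \<delta> where "\<delta> = s\<^sup>2 * real T / (8 * lam)"
      have d0: "\<delta> > 0" using s l0 T by (simp add: \<delta>_def)
      have ww: "\<forall>k'\<in>K1. \<forall>k''\<in>K1. k' \<noteq> k'' \<longrightarrow> 2 * s * real T \<le> Ydist (w k') (w k'')"
      proof (intro ballI impI)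
        fix k' k'' assume a: "k' \<in> K1" "k'' \<in> K1" "k' \<noteq> k''"
        have "tree_dist (m @ k' # zs k') (m @ k'' # zs k'') = real (length (zs k') + length (zs k'') + 2)"
          using a(3) by (rule td_fork)
        also have "\<dots> = 2 * real T" using zsP[OF a(1)] zsP[OF a(2)] by simp
        finally show "2 * s * real T \<le> Ydist (w k') (w k'')"
          using low[of "m @ k' # zs k'" "m @ k'' # zs k''"] unfolding w_def by simp
      qed
      have wY: "\<forall>k'\<in>K1. w k' \<in> Yspace" unfolding w_def using fY by blast
      have xm: "Ydist (f x) (f m) \<le> lam * real T" using ys(2) unfolding m_def .
      have mw: "\<forall>k'\<in>K1. Ydist (f m) (w k') \<le> lam * real T"
      proof
        fix k' assume "k' \<in> K1" then show "Ydist (f m) (w k') \<le> lam * real T" unfolding w_def using zsP by blast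
      qed
      have B0: "0 \<le> 2 * s * real T" using s by simp
      have "\<exists>k'\<in>K1. (Ydist (f x) (w k'))\<^sup>2 \<le> 4 * (lam * real T)\<^sup>2 - ((2 * s * real T)\<^sup>2 - \<delta>\<^sup>2) / 4 + \<delta>\<^sup>2 + 2 * \<delta> * (lam * real T)"
        by (rule core[OF fY fY wY K1 xm mw ww d0 B0])
      then obtain k' where k': "k' \<in> K1"
        "(Ydist (f x) (w k'))\<^sup>2 \<le> 4 * (lam * real T)\<^sup>2 - ((2 * s * real T)\<^sup>2 - \<delta>\<^sup>2) / 4 + \<delta>\<^sup>2 + 2 * \<delta> * (lam * real T)"
        by blast
      have "(Ydist (f x) (w k'))\<^sup>2 \<le> (2 * real T)\<^sup>2 * (lam\<^sup>2 - s\<^sup>2 / 8)"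
        by (rule arith_step[OF s slam _ \<delta>_def k'(2)]) (use T in simp)
      then have "sqrt ((Ydist (f x) (w k'))\<^sup>2) \<le> sqrt ((2 * real T)\<^sup>2 * (lam\<^sup>2 - s\<^sup>2 / 8))"
        by (rule real_sqrt_le_mono)
      moreover have "sqrt ((Ydist (f x) (w k'))\<^sup>2) = Ydist (f x) (w k')"
        unfolding w_def by (rule real_sqrt_unique) (auto intro: Ydist_nonneg fY)
      moreover have "sqrt ((2 * real T)\<^sup>2 * (lam\<^sup>2 - s\<^sup>2 / 8)) = lam' * real (2 * T)"
        unfolding lam'_def by (simp add: real_sqrt_mult)
      ultimately have Yle: "Ydist (f x) (w k') \<le> lam' * real (2 * T)" by simp
      have "length (ys @ k' # zs k') + 1 = 2 * T" using ys(1) zsP[OF k'(1)] by simp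
      moreover have "x @ k # (ys @ k' # zs k') = m @ k' # zs k'" by (simp add: m_def)
      ultimately have "length (ys @ k' # zs k') + 1 = 2 * T \<and> Ydist (f x) (f (x @ k # (ys @ k' # zs k'))) \<le> lam' * real (2 * T)"
        using Yle unfolding w_def m_def by simp
      then show "k \<in> S2" unfolding S2_def by blast
    qed
    moreover have "infinite S1" using P[unfolded Pp_def, rule_format, of x] unfolding S1_def .
    ultimately show "infinite S2" using infinite_super by blast
  qed
  then show ?thesis using slam unfolding lam'_def by simp
qed

lemma no_embed:
  "\<not> (\<exists>D. embeds_with_distortion tree_dist (UNIV :: nat list set) Ydist Yspace D)"
proof
  assume "\<exists>D. embeds_with_distortion tree_dist (UNIV :: nat list set) Ydist Yspace D"
  then obtain D f s where fY: "\<And>x. f x \<in> Yspace" and s: "s > 0"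
    and bi: "\<And>x y. s * tree_dist x y \<le> Ydist (f x) (f y) \<and> Ydist (f x) (f y) \<le> s * D * tree_dist x y"
    unfolding embeds_with_distortion_def by blast
  define L where "L = s * D"
  have low: "\<And>x y. s * tree_dist x y \<le> Ydist (f x) (f y)" using bi by blast
  have td1: "tree_dist x (x @ [k]) = 1" for x k using td_desc[of x "[k]"] by simp
  have up1: "Ydist (f x) (f (x @ [k])) \<le> L" for x k using bi[of x "x @ [k]"] td1 unfolding L_def by simp
  have L0: "0 \<le> L" using up1[of "[]" 0] Ydist_nonneg[OF fY fY, of "[]" "[] @ [0]"] by linarith
  have base: "Pp f 1 L" unfolding Pp_def
  proof
    fix x
    have "{k. \<exists>ys. length ys + 1 = 1 \<and> Ydist (f x) (f (x @ k # ys)) \<le> L * real 1} = UNIV"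
      using up1[of x] by auto
    then show "infinite {k. \<exists>ys. length ys + 1 = 1 \<and> Ydist (f x) (f (x @ k # ys)) \<le> L * real 1}" by simp
  qed
  have iter: "Pp f (2 ^ j) (sqrt (L\<^sup>2 - real j * s\<^sup>2 / 8))" for j
  proof (induction j)
    case 0 then show ?case using base L0 by simp
  next
    case (Suc j)
    have T: "(2::nat) ^ j \<ge> 1" by simp
    from step[OF fY s low Suc.IH T] have st: "s \<le> sqrt (L\<^sup>2 - real j * s\<^sup>2 / 8)"
      "Pp f (2 * 2 ^ j) (sqrt ((sqrt (L\<^sup>2 - real j * s\<^sup>2 / 8))\<^sup>2 - s\<^sup>2 / 8))" by auto
    have "0 < sqrt (L\<^sup>2 - real j * s\<^sup>2 / 8)" using st(1) s by linarith
    then have "0 \<le> L\<^sup>2 - real j * s\<^sup>2 / 8" by simp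
    then have "(sqrt (L\<^sup>2 - real j * s\<^sup>2 / 8))\<^sup>2 - s\<^sup>2 / 8 = L\<^sup>2 - real (Suc j) * s\<^sup>2 / 8"
      by (simp add: algebra_simps)
    then show ?case using st(2) by simp
  qed
  define j where "j = nat \<lceil>8 * L\<^sup>2 / s\<^sup>2\<rceil> + 1"
  have "real j > 8 * L\<^sup>2 / s\<^sup>2" unfolding j_def by linarith
  then have "real j * s\<^sup>2 > 8 * L\<^sup>2" using s by (simp add: field_simps)
  then have neg: "L\<^sup>2 - real j * s\<^sup>2 / 8 < 0" by simp
  have T: "(2::nat) ^ j \<ge> 1" by simp
  from step[OF fY s low iter[of j] T] have "s \<le> sqrt (L\<^sup>2 - real j * s\<^sup>2 / 8)" by blast
  moreover have "sqrt (L\<^sup>2 - real j * s\<^sup>2 / 8) < 0" using neg by simp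
  ultimately show False using s by linarith
qed

lemma finite_embed:
  assumes F: "finite F"
  shows "embeds_with_distortion tree_dist F Ydist Yspace 1"
proof -
  obtain ps where ps: "set ps = F" using finite_list[OF F] by blast
  define M where "M = length ps"
  define g where "g x = (\<lambda>n i. if n = Suc M \<and> i < M then tree_dist x (ps ! i) else 0)" for x
  have bn0: "block_norm (dif (g x) (g y)) n = 0" if "n \<noteq> Suc M" for x y n
    by (rule antisym[OF bn_le bn_nonneg]) (use that in \<open>auto simp: dif_def g_def\<close>)
  have bng0: "block_norm (g x) n = 0" if "n \<noteq> Suc M" for x n
    by (rule antisym[OF bn_le bn_nonneg]) (use that in \<open>auto simp: g_def\<close>)
  have gY: "g x \<in> Yspace" for x
    unfolding Yspace_def
  proof (intro CollectI conjI allI impI)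
    fix n i :: nat assume "n \<le> i" then show "g x n i = 0" by (auto simp: g_def)
  next
    show "summable (\<lambda>n. (block_norm (g x) n)\<^sup>2)"
      by (rule summable_finite[of "{Suc M}"]) (auto simp: bng0)
  qed
  have gd: "Ydist (g x) (g y) = tree_dist x y" if x: "x \<in> F" and y: "y \<in> F" for x y
  proof -
    have "(\<Sum>n. (block_norm (dif (g x) (g y)) n)\<^sup>2) = (\<Sum>n\<in>{Suc M}. (block_norm (dif (g x) (g y)) n)\<^sup>2)"
      by (rule suminf_finite) (auto simp: bn0)
    then have "Ydist (g x) (g y) = block_norm (dif (g x) (g y)) (Suc M)"
      unfolding Ydist_dif by (simp add: bn_nonneg)
    moreover have "block_norm (dif (g x) (g y)) (Suc M) \<le> tree_dist x y"
    proof (rule bn_le)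
      show "0 \<le> tree_dist x y" by (rule td_nonneg)
      fix i assume "i < Suc M"
      show "\<bar>dif (g x) (g y) (Suc M) i\<bar> \<le> tree_dist x y"
        using td_diff[of x "ps ! i" y] td_nonneg[of x y] by (auto simp: dif_def g_def)
    qed
    moreover have "tree_dist x y \<le> block_norm (dif (g x) (g y)) (Suc M)"
    proof -
      obtain i where i: "i < M" "ps ! i = y" using y ps by (auto simp: in_set_conv_nth M_def)
      have "\<bar>dif (g x) (g y) (Suc M) i\<bar> \<le> block_norm (dif (g x) (g y)) (Suc M)"
        using i by (intro bn_ge) simp
      moreover have "dif (g x) (g y) (Suc M) i = tree_dist x y"
        using i by (simp add: dif_def g_def td_self)
      ultimately show ?thesis using td_nonneg[of x y] by simp
    qed
    ultimately show ?thesis by linarith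
  qed
  have inj: "inj_on g F"
  proof (rule inj_onI)
    fix x y assume x: "x \<in> F" and y: "y \<in> F" and e: "g x = g y"
    have "tree_dist x y = Ydist (g x) (g y)" using gd[OF x y] by simp
    also have "\<dots> = Ydist (g x) (g x)" using e by simp
    also have "\<dots> = tree_dist x x" using gd[OF x x] by simp
    finally show "x = y" using td_self td_zero by simp
  qed
  have "inj_on g F \<and> g ` F \<subseteq> Yspace \<and>
        (\<forall>x\<in>F. \<forall>y\<in>F. 1 * tree_dist x y \<le> Ydist (g x) (g y) \<and> Ydist (g x) (g y) \<le> 1 * 1 * tree_dist x y)"
    using inj gY gd by (simp add: image_subset_iff)
  then show ?thesis unfolding embeds_with_distortion_def by (intro exI[of _ g]) (metis zero_less_one)
qed

theorem mainTheorem8: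
  shows "(\<forall>F :: nat list set. finite F \<longrightarrow> distortion tree_dist F Ydist Yspace = 1)
       \<and> (\<exists>lam\<ge>1. \<forall>F :: nat list set. finite F \<longrightarrow> distortion tree_dist F Ydist Yspace \<le> lam)
       \<and> \<not> (\<exists>D. embeds_with_distortion tree_dist (UNIV :: nat list set) Ydist Yspace D)"
proof -
  have d1: "distortion tree_dist F Ydist Yspace = 1" if "finite F" for F :: "nat list set"
    unfolding distortion_def by (rule cInf_eq_minimum) (use finite_embed[OF that] in auto)
  show ?thesis using d1 no_embed by auto
qed


end
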